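(* Let $\Omega$ be a finite nonempty set, let $T\ge 1$ be an integer, and let $g:\Omega^*\to\mathbb{R}$ be a sequence function. Let $O\in\operatorname{argmin}_{S\in\Omega^T} g(S)$ be an optimal sequence of length $T$. Assume that $g$ is postfix monotonically non-increasing and weakly supermodular with respect to $O$ with supermodularity ratio $\alpha(O)\ge 1$. Let $S^T$ be the greedy sequence of length $T$, defined by $S^0=\emptyset$ and $S^{t+1}=S^t\oplus(\omega_t)$ with $\omega_t\in\operatorname{argmin}_{\omega\in\Omega} g(S^t\oplus(\omega))$ for $t=0,\dots,T-1$. Setting $\phi_T(\alpha)=\left(1-\frac{1}{\alpha T}\right)^T$, we have $$g(S^T)\le \bigl(1-\phi_T(\alpha(O))\bigr)\,g(O)+\phi_T(\alpha(O))\,g(\emptyset).$$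
   Context: $\Omega^*$ denotes the set of all finite sequences (including the empty sequence $\emptyset$) with entries in $\Omega$, and $\Omega^n$ the sequences of length $n$. For $S=(S_1,\dots,S_n)$ and $S'=(S'_1,\dots,S'_m)$, the concatenation is $S\oplus S'=(S_1,\dots,S_n,S'_1,\dots,S'_m)$; for $\omega\in\Omega$, $S\oplus\omega$ means $S\oplus(\omega)$. A function $g:\Omega^*\to\mathbb{R}$ is prefix monotonically non-increasing if $g(S\oplus S')\le g(S)$ for all $S,S'\in\Omega^*$, and postfix monotonically non-increasing if $g(S'\oplus S)\le g(S)$ for all $S,S'\in\Omega^*$. A prefix monotonically non-increasing $g$ is weakly supermodular with respect to $S'\in\Omega^*$ with supermodularity ratio $\alpha(S')\ge 1$ if for every $S\in\Omega^*$, $$g(S)-g(S\oplus S')\le \alpha(S')\sum_{i=1}^{|S'|}\bigl(g(S)-g(S\oplus S'_i)\bigr).$$ *)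

theory Defs
  imports Complex_Main
begin

definition prefix_mono_nonincr :: "'a set \<Rightarrow> ('a list \<Rightarrow> real) \<Rightarrow> bool" where
  "prefix_mono_nonincr Om g \<longleftrightarrow>
     (\<forall>S\<in>lists Om. \<forall>S'\<in>lists Om. g (S @ S') \<le> g S)"

definition postfix_mono_nonincr :: "'a set \<Rightarrow> ('a list \<Rightarrow> real) \<Rightarrow> bool" where
  "postfix_mono_nonincr Om g \<longleftrightarrow>
     (\<forall>S\<in>lists Om. \<forall>S'\<in>lists Om. g (S' @ S) \<le> g S)"

definition weakly_supermodular ::
    "'a set \<Rightarrow> ('a list \<Rightarrow> real) \<Rightarrow> 'a list \<Rightarrow> real \<Rightarrow> bool" where
  "weakly_supermodular Om g O' \<alpha> \<longleftrightarrow>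
     prefix_mono_nonincr Om g \<and> \<alpha> \<ge> 1 \<and>
     (\<forall>S\<in>lists Om. g S - g (S @ O') \<le> \<alpha> * (\<Sum>i<length O'. g S - g (S @ [O' ! i])))"

definition is_greedy_seq :: "'a set \<Rightarrow> ('a list \<Rightarrow> real) \<Rightarrow> nat \<Rightarrow> 'a list \<Rightarrow> bool" where
  "is_greedy_seq Om g T S \<longleftrightarrow> length S = T \<and>
     (\<forall>t<T. S ! t \<in> Om \<and>
        (\<forall>\<omega>\<in>Om. g (take t S @ [S ! t]) \<le> g (take t S @ [\<omega>])))"

definition phi :: "nat \<Rightarrow> real \<Rightarrow> real" where
  "phi T \<alpha> = (1 - 1 / (\<alpha> * real T)) ^ T"

end

theory Submission
  imports Defs
begin

theorem theorem1:
  fixes Om :: "'a set" and T :: nat and g :: "'a list \<Rightarrow> real"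
    and O' :: "'a list" and \<alpha> :: real and S :: "'a list"
  assumes "finite Om" and "Om \<noteq> {}" and "T \<ge> 1"
    and "O' \<in> lists Om" and "length O' = T"
    and "\<forall>S'\<in>lists Om. length S' = T \<longrightarrow> g O' \<le> g S'"
    and "postfix_mono_nonincr Om g"
    and "weakly_supermodular Om g O' \<alpha>"
    and "is_greedy_seq Om g T S"
  shows "g S \<le> (1 - phi T \<alpha>) * g O' + phi T \<alpha> * g []"
proof -
  define c where "c = 1 - 1 / (\<alpha> * real T)"
  have a1: "\<alpha> \<ge> 1" using assms(8) unfolding weakly_supermodular_def by auto
  have pos: "\<alpha> * real T \<ge> 1" using a1 assms(3)
    by (metis mult_mono' of_nat_1 of_nat_le_iff mult_1_right order_trans zero_le_one)
  have c0: "c \<ge> 0" using pos unfolding c_def by (simp add: field_simps)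
  have lenS: "length S = T" using assms(9) unfolding is_greedy_seq_def by auto
  have SOm: "\<And>t. t < T \<Longrightarrow> S ! t \<in> Om" using assms(9) unfolding is_greedy_seq_def by auto
  have greedy: "\<And>t w. t < T \<Longrightarrow> w \<in> Om \<Longrightarrow> g (take t S @ [S ! t]) \<le> g (take t S @ [w])"
    using assms(9) unfolding is_greedy_seq_def by auto
  have takeOm: "take t S \<in> lists Om" for t
  proof -
    have "set S \<subseteq> Om" using SOm lenS by (auto simp: in_set_conv_nth)
    then show ?thesis using set_take_subset[of t S] by auto
  qed
  have step: "g (take (Suc t) S) - g O' \<le> c * (g (take t S) - g O')" if tT: "t < T" for t
  proof -
    let ?St = "take t S"
    have tk: "take (Suc t) S = ?St @ [S ! t]" using tT lenS by (simp add: take_Suc_conv_app_nth)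
    have ws: "g ?St - g (?St @ O') \<le> \<alpha> * (\<Sum>i<length O'. g ?St - g (?St @ [O' ! i]))"
      using assms(8) takeOm unfolding weakly_supermodular_def by auto
    have "(\<Sum>i<length O'. g ?St - g (?St @ [O' ! i])) \<le> (\<Sum>i<length O'. g ?St - g (take (Suc t) S))"
    proof (rule sum_mono)
      fix i assume "i \<in> {..<length O'}"
      then have "O' ! i \<in> Om" using assms(4) by (auto simp: nth_mem)
      then show "g ?St - g (?St @ [O' ! i]) \<le> g ?St - g (take (Suc t) S)"
        using greedy[OF tT] tk by auto
    qed
    also have "\<dots> = real T * (g ?St - g (take (Suc t) S))" using assms(5) by simp
    finally have s2: "g ?St - g (?St @ O') \<le> \<alpha> * (real T * (g ?St - g (take (Suc t) S)))"
      using a1 ws mult_left_mono[of _ _ \<alpha>] by (smt (verit))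
    have pm: "g (?St @ O') \<le> g O'"
      using assms(7) assms(4) takeOm unfolding postfix_mono_nonincr_def by auto
    define d where "d = g ?St - g O'"
    define a where "a = g ?St - g (take (Suc t) S)"
    have "d \<le> (\<alpha> * real T) * a" using s2 pm unfolding d_def a_def by (simp add: mult.assoc)
    then have "d / (\<alpha> * real T) \<le> a" using pos by (simp add: field_simps)
    then have "d - a \<le> c * d" unfolding c_def by (simp add: algebra_simps)
    then show ?thesis unfolding d_def a_def by simp
  qed
  have ind: "t \<le> T \<Longrightarrow> g (take t S) - g O' \<le> c ^ t * (g [] - g O')" for t
  proof (induction t)
    case 0 then show ?case by simp
  next
    case (Suc t)
    then have "g (take (Suc t) S) - g O' \<le> c * (g (take t S) - g O')" using step by simp
    also have "\<dots> \<le> c * (c ^ t * (g [] - g O'))"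
      using Suc c0 by (intro mult_left_mono) auto
    finally show ?case by simp
  qed
  have "g S - g O' \<le> c ^ T * (g [] - g O')" using ind[of T] lenS by simp
  then show ?thesis unfolding phi_def c_def[symmetric] by (simp add: algebra_simps)
qed

end
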